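(* Let $\nu\ge 0$, $0\le a<b$ and $d>0$. Then $$\int_{a}^b u^{\nu}e^{-du}\,du \stackrel c \approx b^\nu\left(\frac{a+\frac 1d}{b+\frac 1d}\right)^\nu e^{-ad}\,\frac {b-a} {d(b-a)+1},$$ where the comparability constant $c$ depends only on $\nu$.
   Context: $f\stackrel c\approx g$ means $c^{-1}g\le f\le cg$ for all indicated values of the variables, with $c>0$ depending only on the stated parameters. *)

theory Defs
  imports "HOL-Analysis.Analysis"
begin

end

theory Submission imports Defs begin

lemma Kbound:
  fixes p x :: real assumes p: "p \<ge> 1" and x: "x \<ge> 0"
  shows "(1+x) powr p * exp(-x) \<le> p powr p"
proof -
  have "(1+x)/p \<le> 1 + x/p" using p x by (simp add: field_simps)
  also have "\<dots> \<le> exp (x/p)" by (rule exp_ge_add_one_self)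
  finally have h: "(1+x)/p \<le> exp (x/p)" .
  have "((1+x)/p) powr p \<le> exp (x/p) powr p"
    by (rule powr_mono2) (use p x h in auto)
  also have "exp (x/p) powr p = exp x" using p by (simp add: powr_def)
  finally have "(1+x) powr p / p powr p \<le> exp x" using p x by (simp add: powr_divide)
  then have "(1+x) powr p \<le> p powr p * exp x" using p by (simp add: field_simps)
  then show ?thesis by (simp add: exp_minus field_simps)
qed

lemma integr:
  fixes \<nu> d x y :: real assumes "\<nu> \<ge> 0" "x \<ge> 0"
  shows "(\<lambda>u. u powr \<nu> * exp (- d * u)) integrable_on {x..y}"
proof (cases "\<nu> = 0")
  case True
  have E: "(\<lambda>u. exp (- d * u)) integrable_on {x..y}"
    by (intro integrable_continuous_interval continuous_intros)
  then show ?thesis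
    using integrable_spike_finite[of "{0}" "{x..y}" "\<lambda>u. u powr \<nu> * exp (- d * u)" "\<lambda>u. exp(-d*u)"] E True by auto
next
  case False
  have "continuous_on {x..y} (\<lambda>u. u powr \<nu> * exp (- d * u))"
    by (intro continuous_intros continuous_on_powr') (use assms False in auto)
  then show ?thesis by (rule integrable_continuous_interval)
qed

lemma invsq:
  fixes a b d :: real assumes "d > 0" "a \<le> b"
  shows "((\<lambda>u. 1/(1+d*(u-a))^2) has_integral (b-a)/(1+d*(b-a))) {a..b}"
proof -
  have "((\<lambda>u. 1/(1+d*(u-a))^2) has_integral ((-(1/d) * inverse (1+d*(b-a))) - (-(1/d) * inverse(1+d*(a-a))))) {a..b}"
  proof (rule fundamental_theorem_of_calculus[OF assms(2)])
    fix u assume u: "u \<in> {a..b}"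
    then have "d*(u-a) \<ge> 0" using assms by simp
    then have pos: "1+d*(u-a) > 0" by linarith
    have D1: "((\<lambda>u. 1+d*(u-a)) has_real_derivative d) (at u)"
      by (rule derivative_eq_intros refl)+ simp
    have D2: "((\<lambda>u. -(1/d) * inverse (1+d*(u-a))) has_real_derivative
        (-(1/d)) * (- (d * inverse ((1+d*(u-a)) ^ Suc (Suc 0))))) (at u)"
      by (rule DERIV_cmult, rule DERIV_inverse_fun[OF D1]) (use pos in auto)
    have "(-(1/d)) * (- (d * inverse ((1+d*(u-a)) ^ Suc (Suc 0)))) = 1/(1+d*(u-a))^2"
      using assms pos by (simp add: field_simps power2_eq_square)
    with D2 show "((\<lambda>u. -(1/d) * inverse (1+d*(u-a))) has_vector_derivative 1/(1+d*(u-a))^2) (at u within {a..b})"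
      by (simp add: has_real_derivative_iff_has_vector_derivative has_vector_derivative_at_within)
  qed
  moreover have "(-(1/d) * inverse (1+d*(b-a))) - (-(1/d) * inverse(1+d*(a-a))) = (b-a)/(1+d*(b-a))"
  proof -
    have "d*(b-a) \<ge> 0" using assms by simp
    then have p: "1+d*(b-a) > 0" by linarith
    have "(-(1/d) * inverse (1+d*(b-a))) - (-(1/d) * inverse(1+d*(a-a))) = 1/d - 1/(d*(1+d*(b-a)))"
      by (simp add: field_simps)
    also have "\<dots> = (b-a)/(1+d*(b-a))"
      using assms p by (simp add: divide_simps)
    finally show ?thesis .
  qed
  ultimately show ?thesis by simp
qed


lemma pointwise_upper:
  fixes a b d u :: real
  assumes "0 \<le> a" "a < b" "0 < d" "a \<le> u" "u \<le> b"
  shows "u \<le> 2*(1+d*(u-a))*(b*((a+1/d)/(b+1/d)))"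
proof -
  define m where "m = a + 1/d"
  define s where "s = d*(u-a)"
  have s0: "s \<ge> 0" using assms by (simp add: s_def)
  have mpos: "m > 0" using assms by (simp add: m_def add_nonneg_pos)
  have bpos: "b > 0" using assms by linarith
  have um: "u \<le> m*(1+s)"
  proof -
    have "m*(1+s) = 1/d + a * s + u" using assms by (simp add: m_def s_def field_simps)
    moreover have "a * s \<ge> 0" using assms s0 by simp
    moreover have "1/d > 0" using assms by simp
    ultimately show ?thesis by linarith
  qed
  have "u*b \<le> m*(1+s)*b" using um bpos by (simp add: mult_right_mono)
  moreover have "u*m \<le> b*m*(1+s)"
  proof -
    have "u*m \<le> b*m" using assms mpos by (simp add: mult_right_mono)
    also have "\<dots> \<le> b*m*(1+s)" using bpos mpos s0 by (simp add: mult_left_mono)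
    finally show ?thesis .
  qed
  ultimately have "u*(b+m) \<le> 2*(1+s)*(b*m)" by (simp add: algebra_simps)
  then have h1: "u \<le> 2*(1+s)*(b*m/(b+m))" using bpos mpos by (simp add: field_simps)
  have "b*m/(b+m) \<le> b*m/(b+1/d)"
    using bpos mpos assms by (intro divide_left_mono) (auto simp: m_def intro!: add_pos_pos mult_pos_pos)
  then have "2*(1+s)*(b*m/(b+m)) \<le> 2*(1+s)*(b*m/(b+1/d))" using s0 by (intro mult_left_mono) auto
  with h1 show ?thesis by (simp add: m_def s_def)
qed

theorem mainTheorem10:
  fixes \<nu> :: real
  assumes "\<nu> \<ge> 0"
  shows "\<exists>c>0. \<forall>a b d :: real. 0 \<le> a \<and> a < b \<and> 0 < d \<longrightarrow>
     (let I = integral {a..b} (\<lambda>u. u powr \<nu> * exp (- d * u));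
          g = b powr \<nu> * ((a + 1/d) / (b + 1/d)) powr \<nu> * exp (- a * d)
              * ((b - a) / (d * (b - a) + 1))
      in g / c \<le> I \<and> I \<le> c * g)"
proof -
  define K where "K = (\<nu>+2) powr (\<nu>+2)"
  define c1 where "c1 = 2 powr \<nu> * K"
  define c2 where "c2 = 2 powr (-\<nu>) * exp (-1) / 2"
  define c where "c = max c1 (1/c2)"
  have Kpos: "K > 0" using assms by (simp add: K_def)
  have c2pos: "c2 > 0" by (simp add: c2_def)
  have cpos: "c > 0" using c2pos by (simp add: c_def less_max_iff_disj)
  have c1c: "c1 \<le> c" by (simp add: c_def)
  have c2c: "1/c \<le> c2"
  proof -
    have "1/c2 \<le> c" by (simp add: c_def)
    then show ?thesis using c2pos cpos by (simp add: field_simps)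
  qed
  show ?thesis
  proof (intro exI[of _ c] conjI allI impI cpos)
    fix a b d :: real
    assume H: "0 \<le> a \<and> a < b \<and> 0 < d"
    then have a0: "0 \<le> a" and ab: "a < b" and d0: "0 < d" by auto
    define f where "f = (\<lambda>u::real. u powr \<nu> * exp (- d * u))"
    define I where "I = integral {a..b} f"
    define L where "L = b - a"
    define w where "w = b*((a+1/d)/(b+1/d))"
    define E where "E = exp (- a * d)"
    define Q where "Q = L / (d*L + 1)"
    have L0: "L > 0" using ab by (simp add: L_def)
    have dL: "d*L \<ge> 0" using L0 d0 by simp
    have dL1: "d*L+1 > 0" using dL by linarith
    have Q0: "Q \<ge> 0" using L0 dL by (simp add: Q_def)
    have E0: "E > 0" by (simp add: E_def)
    have bpos: "b > 0" using a0 ab by linarith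
    have wpos: "w > 0" using bpos a0 d0 by (simp add: w_def add_nonneg_pos add_pos_pos)
    have wb: "w \<le> b"
    proof -
      have "(a+1/d)/(b+1/d) \<le> 1" using ab d0 bpos by (simp add: divide_simps add_pos_pos)
      then have "b*((a+1/d)/(b+1/d)) \<le> b*1" using bpos by (intro mult_left_mono) auto
      then show ?thesis unfolding w_def by simp
    qed
    have wm: "w \<le> a + 1/d"
    proof -
      have "w = (a+1/d) * (b/(b+1/d))" by (simp add: w_def)
      moreover have "b/(b+1/d) \<le> 1" using d0 bpos by (simp add: divide_simps add_pos_pos)
      moreover have "a+1/d \<ge> 0" using a0 d0 by simp
      ultimately have "(a+1/d) * (b/(b+1/d)) \<le> (a+1/d) * 1" by (intro mult_left_mono) auto
      then show ?thesis using \<open>w = (a+1/d) * (b/(b+1/d))\<close> by simp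
    qed
    have gdef: "b powr \<nu> * ((a + 1/d) / (b + 1/d)) powr \<nu> * exp (- a * d)
              * ((b - a) / (d * (b - a) + 1)) = w powr \<nu> * E * Q"
    proof -
      have "0 \<le> (a+1/d)/(b+1/d)" using a0 bpos d0 by simp
      then have "b powr \<nu> * ((a+1/d)/(b+1/d)) powr \<nu> = w powr \<nu>"
        unfolding w_def using bpos powr_mult[of b "(a+1/d)/(b+1/d)" \<nu>] by simp
      then show ?thesis by (simp add: E_def Q_def L_def)
    qed
    have fint: "\<And>x y. x \<ge> 0 \<Longrightarrow> f integrable_on {x..y}"
      unfolding f_def using integr assms by blast
    have g0: "w powr \<nu> * E * Q \<ge> 0" using E0 Q0 by simp
    have upper: "I \<le> c1 * (w powr \<nu> * E * Q)"
    proof -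
      define h where "h = (\<lambda>u. (2 powr \<nu> * w powr \<nu> * E * K) * (1/(1+d*(u-a))^2))"
      have hint: "(h has_integral (2 powr \<nu> * w powr \<nu> * E * K) * (L/(1+d*L))) {a..b}"
        unfolding h_def L_def by (rule has_integral_mult_right, rule invsq) (use d0 ab in auto)
      have le: "f u \<le> h u" if u: "u \<in> {a..b}" for u
      proof -
        define s where "s = d*(u-a)"
        have s0: "s \<ge> 0" using u d0 by (simp add: s_def)
        have u0: "u \<ge> 0" using u a0 by simp
        have pu: "u \<le> 2*(1+s)*w" using pointwise_upper[of a b d u] H u by (simp add: s_def w_def)
        have "u powr \<nu> \<le> (2*(1+s)*w) powr \<nu>" using pu u0 assms by (intro powr_mono2) auto
        also have "\<dots> = 2 powr \<nu> * (1+s) powr \<nu> * w powr \<nu>"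
          using s0 wpos powr_mult[of 2 "1+s" \<nu>] powr_mult[of "2*(1+s)" w \<nu>] by simp
        finally have P: "u powr \<nu> \<le> 2 powr \<nu> * (1+s) powr \<nu> * w powr \<nu>" .
        have ex: "exp (- d * u) = E * exp (- s)" by (simp add: E_def s_def flip: exp_add) (simp add: algebra_simps)
        have KK: "(1+s) powr \<nu> * exp (- s) \<le> K * (1/(1+s)^2)"
        proof -
          have "(1+s) powr (\<nu>+2) = (1+s) powr \<nu> * (1+s)^2"
            using s0 by (simp add: powr_add)
          moreover have "(1+s) powr (\<nu>+2) * exp (-s) \<le> K"
            unfolding K_def using Kbound[of "\<nu>+2" s] assms s0 by simp
          ultimately have "(1+s) powr \<nu> * exp (- s) * (1+s)^2 \<le> K" by (simp add: algebra_simps)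
          then show ?thesis using s0 by (simp add: field_simps)
        qed
        have "f u = u powr \<nu> * (E * exp (- s))" by (simp only: f_def ex)
        also have "\<dots> \<le> (2 powr \<nu> * (1+s) powr \<nu> * w powr \<nu>) * (E * exp (- s))"
          using P E0 by (intro mult_right_mono) auto
        also have "\<dots> = (2 powr \<nu> * w powr \<nu> * E) * ((1+s) powr \<nu> * exp (- s))" by (simp add: algebra_simps)
        also have "\<dots> \<le> (2 powr \<nu> * w powr \<nu> * E) * (K * (1/(1+s)^2))"
          using KK E0 by (intro mult_left_mono) auto
        also have "\<dots> = h u" by (simp add: h_def s_def)
        finally show ?thesis .
      qed
      have "I \<le> (2 powr \<nu> * w powr \<nu> * E * K) * (L/(1+d*L))"
        unfolding I_def using has_integral_le[OF integrable_integral[OF fint[OF a0]] hint le] by simp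
      then show ?thesis by (simp add: c1_def Q_def algebra_simps)
    qed
    have lower: "c2 * (w powr \<nu> * E * Q) \<le> I"
    proof -
      define l where "l = min L (1/d)"
      define \<alpha> where "\<alpha> = a + l/2"
      define \<beta> where "\<beta> = a + l"
      have l0: "l > 0" using L0 d0 by (simp add: l_def)
      have "l \<le> L" by (simp add: l_def)
      have lQ: "Q \<le> l"
      proof (cases "L \<le> 1/d")
        case True
        then have "l = L" by (simp add: l_def)
        moreover have "L/(d*L+1) \<le> L" using L0 dL by (simp add: divide_simps)
        ultimately show ?thesis by (simp add: Q_def)
      next
        case False
        then have "l = 1/d" by (simp add: l_def)
        moreover have "L/(d*L+1) \<le> 1/d" using L0 d0 dL1 by (simp add: divide_simps mult_pos_pos add_pos_pos)
        ultimately show ?thesis by (simp add: Q_def)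
      qed
      have aw: "w/2 \<le> \<alpha>"
      proof (cases "L \<le> 1/d")
        case True
        then have "l = L" by (simp add: l_def)
        then have "\<alpha> = (a+b)/2" by (simp add: \<alpha>_def L_def field_simps)
        then show ?thesis using wb a0 by simp
      next
        case False
        then have "l = 1/d" by (simp add: l_def)
        then show ?thesis using wm a0 by (simp add: \<alpha>_def)
      qed
      have ab1: "a \<le> \<alpha>" "\<alpha> \<le> \<beta>" "\<beta> \<le> b" using l0 \<open>l \<le> L\<close> by (auto simp: \<alpha>_def \<beta>_def L_def)
      define m0 where "m0 = w powr \<nu> / 2 powr \<nu> * (E * exp (-1))"
      have lo: "m0 \<le> f u" if u: "u \<in> {\<alpha>..\<beta>}" for u
      proof -
        have uw: "w/2 \<le> u" using u aw by simp
        have "(w/2) powr \<nu> \<le> u powr \<nu>" using uw wpos assms by (intro powr_mono2) auto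
        then have P: "w powr \<nu> / 2 powr \<nu> \<le> u powr \<nu>" using wpos by (simp add: powr_divide)
        have "d*u \<le> d*a + d*l" using u d0 by (simp add: \<beta>_def mult_left_mono flip: distrib_left)
        moreover have "d*l \<le> 1" using d0 by (simp add: l_def min_def field_simps)
        ultimately have "- d*u \<ge> -a*d - 1" by (simp add: algebra_simps)
        then have Ex: "E * exp (-1) \<le> exp (- d * u)" by (simp add: E_def flip: exp_add)
        show ?thesis unfolding m0_def f_def
          by (rule mult_mono[OF P Ex]) (use E0 in auto)
      qed
      have "m0 * (\<beta> - \<alpha>) \<le> integral {\<alpha>..\<beta>} f"
      proof -
        have "((\<lambda>u. m0) has_integral m0 * (\<beta> - \<alpha>)) {\<alpha>..\<beta>}"
          using has_integral_const_real[of m0 \<alpha> \<beta>] ab1 by (simp add: mult.commute)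
        then show ?thesis using has_integral_le[OF _ integrable_integral[OF fint] lo] ab1 a0 by auto
      qed
      moreover have "integral {\<alpha>..\<beta>} f \<le> I"
      proof -
        have fp: "\<And>u. u \<ge> 0 \<Longrightarrow> f u \<ge> 0" by (simp add: f_def)
        have "integral {a..\<alpha>} f + integral {\<alpha>..b} f = I"
          unfolding I_def by (rule Henstock_Kurzweil_Integration.integral_combine) (use ab1 fint a0 in auto)
        moreover have "integral {\<alpha>..\<beta>} f + integral {\<beta>..b} f = integral {\<alpha>..b} f"
          by (rule Henstock_Kurzweil_Integration.integral_combine) (use ab1 fint a0 in auto)
        moreover have "integral {a..\<alpha>} f \<ge> 0" by (rule integral_nonneg) (use fint a0 fp in auto)
        moreover have "integral {\<beta>..b} f \<ge> 0" by (rule integral_nonneg) (use fint a0 ab1 fp in auto)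
        ultimately show ?thesis by linarith
      qed
      moreover have "c2 * (w powr \<nu> * E * Q) \<le> m0 * (\<beta> - \<alpha>)"
      proof -
        have bal: "\<beta> - \<alpha> = l/2" by (simp add: \<alpha>_def \<beta>_def)
        have m0pos: "m0 \<ge> 0" using E0 by (simp add: m0_def)
        have "c2 * (w powr \<nu> * E * Q) = m0 * (Q/2)"
          by (simp add: c2_def m0_def powr_minus divide_simps)
        also have "\<dots> \<le> m0 * (l/2)" using lQ m0pos by (intro mult_left_mono) auto
        finally show ?thesis by (simp only: bal)
      qed
      ultimately show ?thesis by linarith
    qed
    have "(w powr \<nu> * E * Q) / c \<le> I"
    proof -
      have "(w powr \<nu> * E * Q) / c = (1/c) * (w powr \<nu> * E * Q)" by simp
      also have "\<dots> \<le> c2 * (w powr \<nu> * E * Q)" using c2c g0 by (intro mult_right_mono) auto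
      finally show ?thesis using lower by linarith
    qed
    moreover have "I \<le> c * (w powr \<nu> * E * Q)"
      using upper c1c g0 mult_right_mono[OF c1c g0] by linarith
    ultimately show "let I = integral {a..b} (\<lambda>u. u powr \<nu> * exp (- d * u));
          g = b powr \<nu> * ((a + 1/d) / (b + 1/d)) powr \<nu> * exp (- a * d)
              * ((b - a) / (d * (b - a) + 1))
      in g / c \<le> I \<and> I \<le> c * g"
      unfolding Let_def gdef by (simp add: I_def f_def)
  qed
qed

end
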